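(* Let $0<q<1$, $N$ a positive integer, $n\in\{0,1,\dots,N\}$, and $\gamma\in\mathbb{C}$ with $\gamma q,\gamma q^2\notin\{q^{-j}:j\in\mathbb{Z}_{\ge0}\}$. Then $${}_4\phi_3\!\left(\begin{matrix}q^{-2n},q^{-2(N-n)-1},q^{-x},-\gamma q^{x+1}\\ q^{-N},-q^{-N},\gamma q\end{matrix};q,q\right)={}_4\phi_3\!\left(\begin{matrix}q^{-2n},q^{2n-2N-1},q^{-2x},\gamma^2q^{2x+2}\\ q^{-2N},\gamma q,\gamma q^2\end{matrix};q^2,q^2\right)$$ holds for all $x\in\mathbb{C}$ if $2n\le N$, and holds for $x\in\{0,1,\dots,N\}$ if $2n>N$.
   Context: $(x;q)_k=\prod_{j=0}^{k-1}(1-xq^j)$. A terminating ${}_4\phi_3\!\left(\begin{matrix}a_1,\dots,a_4\\ b_1,b_2,b_3\end{matrix};p,p\right)$ (base $p$, here $p=q$ or $p=q^2$) means $\sum_{k=0}^K\frac{(a_1,\dots,a_4;p)_k}{(b_1,b_2,b_3,p;p)_k}p^k$, where $K$ is the smallest nonnegative integer such that some numerator parameter $a_i$ equals $p^{-K}$ (the sum is truncated at the first numerator parameter that causes termination). *)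

theory Defs
  imports Complex_Main
begin

definition qpoch :: "complex \<Rightarrow> complex \<Rightarrow> nat \<Rightarrow> complex" where
  "qpoch x p k = (\<Prod>j<k. (1 - x * p ^ j))"

definition qpow :: "real \<Rightarrow> complex \<Rightarrow> complex" where
  "qpow q z = exp (z * complex_of_real (ln q))"

definition phi43_term ::
  "complex \<Rightarrow> complex \<Rightarrow> complex \<Rightarrow> complex \<Rightarrow> complex \<Rightarrow> complex \<Rightarrow> complex
   \<Rightarrow> complex \<Rightarrow> complex" where
  "phi43_term a1 a2 a3 a4 b1 b2 b3 p =
    (let K = (LEAST K::nat. a1 = inverse (p ^ K) \<or> a2 = inverse (p ^ K)
                          \<or> a3 = inverse (p ^ K) \<or> a4 = inverse (p ^ K))
     in \<Sum>k\<le>K. (qpoch a1 p k * qpoch a2 p k * qpoch a3 p k * qpoch a4 p k)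
               / (qpoch b1 p k * qpoch b2 p k * qpoch b3 p k * qpoch p p k) * p ^ k)"

end

theory Submission
  imports Defs "HOL-Computational_Algebra.Polynomial"
begin

lemma core_poly:
  fixes c u P b1 b2 b3 :: complex
  shows "-P*(c*(u-c*P)*(u-b1)*(u-b2)*(u-b3)+(1-u*P)*(b1*u-c)*(b2*u-c)*(b3*u-c))
   = (u*u-c)*((c-b1*b2*b3*P)*(1-u*P)*(u-c*P)-c*u*(1-b1*P)*(1-b2*P)*(1-b3*P))"
  by (simp add: algebra_simps)

lemma cancel_aux: "(d::complex) \<noteq> 0 \<Longrightarrow> a/(b*d) * (x*d) = x*(a/b)"
  by (simp add: field_simps)

lemma cancel_aux2: "(d::complex) \<noteq> 0 \<Longrightarrow> a/(b*d*e) * (x*d) = x*(a/(b*e))"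
  by (simp add: field_simps)

lemma rearr: "(B::complex)*(a*b*d*e) + D*(f*g*d*h) = d*(a*b*(B*e) + f*g*(D*h))" by (simp add: algebra_simps)

lemma cancel_aux3: "(d::complex) \<noteq> 0 \<Longrightarrow> a/(b*d) * (d*F/P) = a*F/(b*P)"
  by (simp add: field_simps)

lemma core:
  fixes p c u P b1 b2 b3 :: complex
  assumes "p \<noteq> 0" "c \<noteq> 0" "u \<noteq> 0" "P \<noteq> 0" "u^2 \<noteq> c" "u^2 \<noteq> c*p" "p*u^2 \<noteq> c"
  shows "(1-b1/u)*(1-b2/u)*(1-b3/u)*(1-c/u)/((1-c/u^2)*(1-c*p/u^2)) *
     ((1-u/p)*(1-u)*(1-c*P/u)*(1-c*P*p/u) - (1-u)*(1-u*P)*(1-c/u)*(1-c*P/u))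
   + (1-1/u)*(b3-c/u)*(b2-c/u)*(b1-c/u)/(c*p*(1-c/(p*u^2))*(1-c/u^2)) *
     ((1-u*P)*(1-u*P*p)*(1-c/(p*u))*(1-c/u) - (1-u)*(1-u*P)*(1-c/u)*(1-c*P/u))
   = (inverse (P*p) - 1)*(1 - b1*b2*b3/(p*c)*(P*p)) * ((1-u)*(1-u*P)*(1-c/u)*(1-c*P/u))
     + (1 - inverse (P*p))*(1-b1*P)*(1-b2*P)*(1-b3*P) * ((1-u)*(1-c/u))"
  (is "?B * ?X + ?D * ?Y = ?R")
proof -
  define F where "F = (c-b1*b2*b3*P)*(1-u*P)*(u-c*P)-c*u*(1-b1*P)*(1-b2*P)*(1-b3*P)"
  have uc: "u^2 - c \<noteq> 0" "u^2 - c*p \<noteq> 0" "p*u^2 - c \<noteq> 0" using assms by auto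
  have h1: "?X = (1-u)*(1-c*P/u)*(1-P*p)*(c/u - u/p)"
    using assms by (simp add: field_simps; simp add: algebra_simps)
  have h2: "?Y = (1-u*P)*(1-c/u)*(1-P*p)*(u - c/(p*u))"
    using assms by (simp add: field_simps; simp add: algebra_simps)
  have h3: "?B*(c/u-u/p) = -(u-b1)*(u-b2)*(u-b3)*(u-c)/(p*u*(u^2-c))"
  proof -
    have q1: "(c/u-u/p) = -(u/p)*(1-c*p/u^2)" using assms by (simp add: field_simps power2_eq_square)
    have q2: "1-c*p/u^2 \<noteq> 0" using assms by (simp add: field_simps)
    have "?B*(c/u-u/p) = -(u/p)*((1-b1/u)*(1-b2/u)*(1-b3/u)*(1-c/u)/(1-c/u^2))"
      unfolding q1 by (rule cancel_aux[OF q2])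
    also have "\<dots> = -(u-b1)*(u-b2)*(u-b3)*(u-c)/(p*u*(u^2-c))"
    proof -
      have e: "1-x/u = (u-x)/u" for x using assms by (simp add: field_simps)
      have e2: "1-c/u^2 = (u^2-c)/u^2" using assms by (simp add: field_simps)
      show ?thesis unfolding e e2 using assms uc by (simp add: field_simps power2_eq_square)
    qed
    finally show ?thesis .
  qed
  have h4: "?D*(u - c/(p*u)) = (u-1)*(b1*u-c)*(b2*u-c)*(b3*u-c)/(c*p*u*(u^2-c))"
  proof -
    have q1: "(u - c/(p*u)) = u*(1-c/(p*u^2))" using assms by (simp add: field_simps power2_eq_square)
    have q2: "1-c/(p*u^2) \<noteq> 0" using assms by (simp add: field_simps)
    have "?D*(u - c/(p*u)) = u*((1-1/u)*(b3-c/u)*(b2-c/u)*(b1-c/u)/(c*p*(1-c/u^2)))"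
      unfolding q1 by (rule cancel_aux2[OF q2])
    also have "\<dots> = (u-1)*(b1*u-c)*(b2*u-c)*(b3*u-c)/(c*p*u*(u^2-c))"
    proof -
      have e: "x-c/u = (x*u-c)/u" for x using assms by (simp add: field_simps)
      have e1: "1-1/u = (u-1)/u" using assms by (simp add: field_simps)
      have e2: "1-c/u^2 = (u^2-c)/u^2" using assms by (simp add: field_simps)
      show ?thesis unfolding e e1 e2 using assms uc by (simp add: field_simps power2_eq_square)
    qed
    finally show ?thesis .
  qed
  define X where "X = (u-b1)*(u-b2)*(u-b3)"
  define Y where "Y = (b1*u-c)*(b2*u-c)*(b3*u-c)"
  define K where "K = (1-u)*(u-c)/(p*c*u^2*(u^2-c))"
  have h3': "?B*(c/u-u/p) = -(X*(u-c))/(p*u*(u^2-c))" unfolding h3 X_def by (simp add: algebra_simps)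
  have h4': "?D*(u - c/(p*u)) = (u-1)*Y/(c*p*u*(u^2-c))" unfolding h4 Y_def by (simp add: algebra_simps)
  have t1: "(1-u)*(1-c*P/u)*(-(X*(u-c))/(p*u*(u^2-c))) = K*(-(c*(u-c*P)*X))"
    unfolding K_def using assms uc by (simp add: field_simps power2_eq_square)
  have t2: "(1-u*P)*(1-c/u)*((u-1)*Y/(c*p*u*(u^2-c))) = K*(-((1-u*P)*Y))"
    unfolding K_def using assms uc by (simp add: field_simps power2_eq_square)
  have cp: "-(c*(u-c*P)*X+(1-u*P)*Y) = (u^2-c)*F/P"
    using core_poly[of P c u b1 b2 b3] assms unfolding F_def X_def Y_def
    by (simp add: field_simps power2_eq_square)
  have "?B * ?X + ?D * ?Y = (1-P*p)*((1-u)*(1-c*P/u)*(?B*(c/u-u/p)) + (1-u*P)*(1-c/u)*(?D*(u - c/(p*u))))"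
    unfolding h1 h2 by (rule rearr)
  also have "\<dots> = (1-P*p)*(K*(-(c*(u-c*P)*X+(1-u*P)*Y)))"
    unfolding h3' h4' t1 t2 by (simp add: algebra_simps)
  also have "\<dots> = (1-P*p)*(1-u)*(u-c)*F/(p*c*u^2*P)"
    unfolding cp K_def using cancel_aux3[OF uc(1), of "(1-u)*(u-c)" "p*c*u^2" F P] by simp
  also have "\<dots> = ?R"
    unfolding F_def using assms by (simp add: field_simps power2_eq_square; simp add: algebra_simps)
  finally show ?thesis .
qed

lemma qpoch_S1: "qpoch x p (Suc (Suc t)) = (1-x)*(1-x*p^(Suc t))*(\<Prod>i<t. (1 - x*p^(Suc i)))"
  unfolding qpoch_def
  apply (subst prod.lessThan_Suc_shift)
  apply (subst prod.lessThan_Suc)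
  apply (simp only: power_0 mult_1_right)
  by (simp add: algebra_simps)

lemma qpoch_S2: "qpoch x p (Suc (Suc t)) = (1-x)*(1-x*p)*(\<Prod>i<t. (1 - x*p^(Suc (Suc i))))"
  unfolding qpoch_def by (simp add: prod.lessThan_Suc_shift del: prod.lessThan_Suc)

lemma qpoch_S3: "qpoch x p (Suc (Suc t)) = (1-x*p^t)*(1-x*p^(Suc t))*(\<Prod>i<t. (1 - x*p^i))"
  unfolding qpoch_def by (simp add: prod.lessThan_Suc)

lemma qpoch_Suc_shift: "qpoch x p (Suc t) = (1-x)*(\<Prod>i<t. (1 - x*p^(Suc i)))"
  unfolding qpoch_def by (simp add: prod.lessThan_Suc_shift del: prod.lessThan_Suc)

definition phib :: "complex \<Rightarrow> complex \<Rightarrow> nat \<Rightarrow> complex \<Rightarrow> complex" where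
  "phib p c k u = qpoch u p k * qpoch (c/u) p k"

definition Bop where "Bop p c b1 b2 b3 u = (1-b1/u)*(1-b2/u)*(1-b3/u)*(1-c/u)/((1-c/u^2)*(1-c*p/u^2))"
definition Dop where "Dop p c b1 b2 b3 u = (1-1/u)*(b3-c/u)*(b2-c/u)*(b1-c/u)/(c*p*(1-c/(p*u^2))*(1-c/u^2))"
definition opr where "opr p c b1 b2 b3 f u = Bop p c b1 b2 b3 u * (f (u/p) - f u) + Dop p c b1 b2 b3 u * (f (p*u) - f u)"
definition mu where "mu p c b1 b2 b3 k = (inverse (p^k) - 1)*(1 - b1*b2*b3/(p*c)*p^k)"
definition nu where "nu p b1 b2 b3 k = (1 - inverse (p^k))*(1-b1*p^(k-1))*(1-b2*p^(k-1))*(1-b3*p^(k-1))"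

lemma BDfacts:
  fixes p c u b1 b2 b3 :: complex
  assumes "p \<noteq> 0" "c \<noteq> 0" "u \<noteq> 0" "u^2 \<noteq> c" "u^2 \<noteq> c*p" "p*u^2 \<noteq> c"
  shows "Bop p c b1 b2 b3 u*(c/u-u/p) = -(u-b1)*(u-b2)*(u-b3)*(u-c)/(p*u*(u^2-c))"
    "Dop p c b1 b2 b3 u*(u - c/(p*u)) = (u-1)*(b1*u-c)*(b2*u-c)*(b3*u-c)/(c*p*u*(u^2-c))"
proof -
  have uc: "u^2 - c \<noteq> 0" "u^2 - c*p \<noteq> 0" "p*u^2 - c \<noteq> 0" using assms by auto
  have h3: "Bop p c b1 b2 b3 u*(c/u-u/p) = -(u-b1)*(u-b2)*(u-b3)*(u-c)/(p*u*(u^2-c))"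
  proof -
    have q1: "(c/u-u/p) = -(u/p)*(1-c*p/u^2)" using assms by (simp add: field_simps power2_eq_square)
    have q2: "1-c*p/u^2 \<noteq> 0" using assms by (simp add: field_simps)
    have "Bop p c b1 b2 b3 u*(c/u-u/p) = -(u/p)*((1-b1/u)*(1-b2/u)*(1-b3/u)*(1-c/u)/(1-c/u^2))"
      unfolding q1 by (unfold Bop_def, rule cancel_aux[OF q2])
    also have "\<dots> = -(u-b1)*(u-b2)*(u-b3)*(u-c)/(p*u*(u^2-c))"
    proof -
      have e: "1-x/u = (u-x)/u" for x using assms by (simp add: field_simps)
      have e2: "1-c/u^2 = (u^2-c)/u^2" using assms by (simp add: field_simps)
      show ?thesis unfolding e e2 using assms uc by (simp add: field_simps power2_eq_square)
    qed
    finally show ?thesis .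
  qed
  have h4: "Dop p c b1 b2 b3 u*(u - c/(p*u)) = (u-1)*(b1*u-c)*(b2*u-c)*(b3*u-c)/(c*p*u*(u^2-c))"
  proof -
    have q1: "(u - c/(p*u)) = u*(1-c/(p*u^2))" using assms by (simp add: field_simps power2_eq_square)
    have q2: "1-c/(p*u^2) \<noteq> 0" using assms by (simp add: field_simps)
    have "Dop p c b1 b2 b3 u*(u - c/(p*u)) = u*((1-1/u)*(b3-c/u)*(b2-c/u)*(b1-c/u)/(c*p*(1-c/u^2)))"
      unfolding q1 by (unfold Dop_def, rule cancel_aux2[OF q2])
    also have "\<dots> = (u-1)*(b1*u-c)*(b2*u-c)*(b3*u-c)/(c*p*u*(u^2-c))"
    proof -
      have e: "x-c/u = (x*u-c)/u" for x using assms by (simp add: field_simps)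
      have e1: "1-1/u = (u-1)/u" using assms by (simp add: field_simps)
      have e2: "1-c/u^2 = (u^2-c)/u^2" using assms by (simp add: field_simps)
      show ?thesis unfolding e e1 e2 using assms uc by (simp add: field_simps power2_eq_square)
    qed
    finally show ?thesis .
  qed
  show "Bop p c b1 b2 b3 u*(c/u-u/p) = -(u-b1)*(u-b2)*(u-b3)*(u-c)/(p*u*(u^2-c))" by (rule h3)
  show "Dop p c b1 b2 b3 u*(u - c/(p*u)) = (u-1)*(b1*u-c)*(b2*u-c)*(b3*u-c)/(c*p*u*(u^2-c))" by (rule h4)
qed

lemma k1poly:
  fixes p c u b1 b2 b3 :: complex
  assumes "p \<noteq> 0" "c \<noteq> 0" "u \<noteq> 0" "u^2 - c \<noteq> 0"
  shows "(1-p)*(-(u-b1)*(u-b2)*(u-b3)*(u-c)/(p*u*(u^2-c))) + (1-p)*((u-1)*(b1*u-c)*(b2*u-c)*(b3*u-c)/(c*p*u*(u^2-c)))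
   = (inverse p-1)*(1-b1*b2*b3/(p*c)*p)*((1-u)*(1-c/u)) + (1-inverse p)*(1-b1)*(1-b2)*(1-b3)"
proof -
  have A: "(inverse p-1)*(1-b1*b2*b3/(p*c)*p)*((1-u)*(1-c/u)) + (1-inverse p)*(1-b1)*(1-b2)*(1-b3)
    = (1-p)*((c-b1*b2*b3)*(1-u)*(u-c) - c*u*(1-b1)*(1-b2)*(1-b3))/(p*c*u)"
  proof -
    have e: "inverse p-1 = (1-p)/p" "1-inverse p = -(1-p)/p" "1-b1*b2*b3/(p*c)*p = (c-b1*b2*b3)/c" "1-c/u = (u-c)/u"
      using assms by (simp_all add: field_simps)
    show ?thesis unfolding e using assms by (simp add: divide_simps) (simp add: algebra_simps)
  qed
  have B: "(1-p)*(-(u-b1)*(u-b2)*(u-b3)*(u-c)/(p*u*(u^2-c))) + (1-p)*((u-1)*(b1*u-c)*(b2*u-c)*(b3*u-c)/(c*p*u*(u^2-c)))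
    = (1-p)*(-c*((u-b1)*(u-b2)*(u-b3)*(u-c)) + (u-1)*(b1*u-c)*(b2*u-c)*(b3*u-c))/(c*p*u*(u^2-c))"
  proof -
    have G: "a*(-x1*x2*x3*x4/(p*u*d)) + a*(y/(c*p*u*d)) = a*(-c*(x1*x2*x3*x4) + y)/(c*p*u*d)" if "d \<noteq> 0" for a x1 x2 x3 x4 y d
      using assms that by (simp add: field_simps)
    show ?thesis by (rule G[OF assms(4)])
  qed
  have C: "-c*((u-b1)*(u-b2)*(u-b3)*(u-c)) + (u-1)*(b1*u-c)*(b2*u-c)*(b3*u-c) = (u^2-c)*((c-b1*b2*b3)*(1-u)*(u-c) - c*u*(1-b1)*(1-b2)*(1-b3))"
    by (simp add: algebra_simps power2_eq_square)
  have D: "a*(d*G)/(c*p*u*d) = a*G/(p*c*u)" if "d \<noteq> 0" for a d G :: complex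
    using that by (simp add: field_simps)
  show ?thesis unfolding A B C by (rule D[OF assms(4)])
qed

lemma opr_phib:
  fixes p c u b1 b2 b3 :: complex
  assumes "p \<noteq> 0" "c \<noteq> 0" "u \<noteq> 0" "u^2 \<noteq> c" "u^2 \<noteq> c*p" "p*u^2 \<noteq> c"
  shows "opr p c b1 b2 b3 (phib p c k) u = mu p c b1 b2 b3 k * phib p c k u + nu p b1 b2 b3 k * phib p c (k-1) u"
proof (cases k)
  case 0
  then show ?thesis by (simp add: opr_def phib_def qpoch_def mu_def nu_def)
next
  case (Suc j)
  show ?thesis
  proof (cases j)
    case 0
    have uc: "u^2 - c \<noteq> 0" using assms by auto
    have e: "(1 - u/p)*(1 - c*p/u) - (1-u)*(1-c/u) = (1-p)*(c/u-u/p)"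
         "(1 - p*u)*(1 - c/(p*u)) - (1-u)*(1-c/u) = (1-p)*(u - c/(p*u))"
      using assms by (simp_all add: field_simps; simp add: algebra_simps)+
    have "opr p c b1 b2 b3 (phib p c k) u = Bop p c b1 b2 b3 u * ((1 - u/p)*(1 - c*p/u) - (1-u)*(1-c/u))
       + Dop p c b1 b2 b3 u * ((1 - p*u)*(1 - c/(p*u)) - (1-u)*(1-c/u))"
      using assms by (simp add: opr_def phib_def qpoch_def Suc 0 field_simps)
    also have "\<dots> = (1-p)*(Bop p c b1 b2 b3 u*(c/u-u/p)) + (1-p)*(Dop p c b1 b2 b3 u*(u - c/(p*u)))"
      unfolding e by (simp add: algebra_simps)
    also have "\<dots> = (1-p)*(-(u-b1)*(u-b2)*(u-b3)*(u-c)/(p*u*(u^2-c))) + (1-p)*((u-1)*(b1*u-c)*(b2*u-c)*(b3*u-c)/(c*p*u*(u^2-c)))"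
      unfolding BDfacts[OF assms] ..
    also have "\<dots> = mu p c b1 b2 b3 k * phib p c k u + nu p b1 b2 b3 k * phib p c (k-1) u"
      unfolding k1poly[OF assms(1-3) uc] by (simp add: mu_def nu_def phib_def qpoch_def Suc 0)
    finally show ?thesis .
  next
    case (Suc t)
    define Z where "Z = (\<Prod>i<t. (1 - u*p^(Suc i)))"
    define V where "V = (\<Prod>i<t. (1 - (c/u)*p^(Suc i)))"
    define P where "P = p^(Suc t)"
    have P0: "P \<noteq> 0" using assms by (simp add: P_def)
    have k: "k = Suc (Suc t)" using \<open>k = Suc j\<close> Suc by simp
    have f0: "phib p c k u = (1-u)*(1-u*P)*(1-c/u)*(1-c*P/u) * (Z*V)"
    proof -
      have "qpoch u p k = (1-u)*(1-u*P)*Z"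
        unfolding k qpoch_S1 Z_def P_def by simp
      moreover have "qpoch (c/u) p k = (1-c/u)*(1-c*P/u)*V"
        unfolding k qpoch_S1 V_def P_def by simp
      ultimately show ?thesis unfolding phib_def by (simp add: ac_simps)
    qed
    have f1: "phib p c k (u/p) = (1-u/p)*(1-u)*(1-c*P/u)*(1-c*P*p/u) * (Z*V)"
    proof -
      have "qpoch (u/p) p k = (1-u/p)*(1-u)*Z"
        unfolding k qpoch_S2 Z_def using assms by (simp add: field_simps)
      moreover have "qpoch (c/(u/p)) p k = (1-c*P/u)*(1-c*P*p/u)*V"
        unfolding k qpoch_S3 V_def P_def using assms by (simp add: field_simps)
      ultimately show ?thesis unfolding phib_def by (simp add: ac_simps)
    qed
    have f2: "phib p c k (p*u) = (1-u*P)*(1-u*P*p)*(1-c/(p*u))*(1-c/u) * (Z*V)"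
    proof -
      have "qpoch (p*u) p k = (1-u*P)*(1-u*P*p)*Z"
        unfolding k qpoch_S3 Z_def P_def using assms by (simp add: field_simps)
      moreover have "qpoch (c/(p*u)) p k = (1-c/(p*u))*(1-c/u)*V"
        unfolding k qpoch_S2 V_def using assms by (simp add: field_simps)
      ultimately show ?thesis unfolding phib_def by (simp add: ac_simps)
    qed
    have f3: "phib p c (k-1) u = (1-u)*(1-c/u)*(Z*V)"
      unfolding k phib_def Z_def V_def by (simp add: qpoch_Suc_shift del: qpoch_def)
    have pk: "p^k = P*p" "p^(k-1) = P" unfolding k P_def by simp_all
    have "opr p c b1 b2 b3 (phib p c k) u = (Z*V) * (Bop p c b1 b2 b3 u *
     ((1-u/p)*(1-u)*(1-c*P/u)*(1-c*P*p/u) - (1-u)*(1-u*P)*(1-c/u)*(1-c*P/u))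
   + Dop p c b1 b2 b3 u *
     ((1-u*P)*(1-u*P*p)*(1-c/(p*u))*(1-c/u) - (1-u)*(1-u*P)*(1-c/u)*(1-c*P/u)))"
      unfolding opr_def f0 f1 f2 by (simp add: algebra_simps)
    also have "\<dots> = (Z*V) * ((inverse (P*p) - 1)*(1 - b1*b2*b3/(p*c)*(P*p)) * ((1-u)*(1-u*P)*(1-c/u)*(1-c*P/u))
     + (1 - inverse (P*p))*(1-b1*P)*(1-b2*P)*(1-b3*P) * ((1-u)*(1-c/u)))"
      unfolding Bop_def Dop_def using core[OF assms(1,2,3) P0 assms(4-6)] by simp
    also have "\<dots> = mu p c b1 b2 b3 k * phib p c k u + nu p b1 b2 b3 k * phib p c (k-1) u"
      unfolding f0 f3 mu_def nu_def pk using assms P0 by (simp add: field_simps; simp add: algebra_simps)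
    finally show ?thesis .
  qed
qed

definition coefA where
  "coefA p a1 e b1 b2 b3 k = qpoch a1 p k * qpoch e p k * p^k / (qpoch b1 p k * qpoch b2 p k * qpoch b3 p k * qpoch p p k)"

lemma qpoch_Suc: "qpoch x p (Suc k) = qpoch x p k * (1 - x*p^k)"
  unfolding qpoch_def by simp

lemma rec_poly:
  fixes X Y e :: complex
  assumes "X \<noteq> 0"
  shows "-(1-Y*X)*(1-e*X)/X = (Y-1)*(1-e) - (inverse X - 1)*(1-Y*e*X)"
  using assms by (simp add: field_simps; simp add: algebra_simps)

lemma canc4: "x1 \<noteq> 0 \<Longrightarrow> x2 \<noteq> 0 \<Longrightarrow> x3 \<noteq> 0 \<Longrightarrow> x4 \<noteq> 0 \<Longrightarrow>
   (A::complex)/(x1*x2*x3*x4) * (N*x1*x2*x3) = A*N/x4"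
  by (simp add: field_simps)

lemma coefA_rec:
  fixes p a1 e b1 b2 b3 c :: complex
  assumes p0: "p \<noteq> 0" and c0: "c \<noteq> 0"
    and a1: "a1 = inverse (p^m)"
    and bal: "b1*b2*b3 = p*a1*e*c"
    and nz: "qpoch b1 p (Suc k) \<noteq> 0" "qpoch b2 p (Suc k) \<noteq> 0" "qpoch b3 p (Suc k) \<noteq> 0" "qpoch p p (Suc k) \<noteq> 0"
  shows "coefA p a1 e b1 b2 b3 (Suc k) * nu p b1 b2 b3 (Suc k)
       = (mu p c b1 b2 b3 m - mu p c b1 b2 b3 k) * coefA p a1 e b1 b2 b3 k"
proof -
  have d: "qpoch b1 p k \<noteq> 0" "qpoch b2 p k \<noteq> 0" "qpoch b3 p k \<noteq> 0" "qpoch p p k \<noteq> 0"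
    "1 - b1*p^k \<noteq> 0" "1 - b2*p^k \<noteq> 0" "1 - b3*p^k \<noteq> 0" "1 - p*p^k \<noteq> 0"
    using nz unfolding qpoch_Suc by auto
  define X where "X = p^k"
  have X0: "X \<noteq> 0" using p0 by (simp add: X_def)
  have s: "b1*b2*b3/(p*c) = a1*e" using bal p0 c0 by (simp add: field_simps)
  have am: "a1 * p^m = 1" using a1 p0 by simp
  have mum: "mu p c b1 b2 b3 m = (a1 - 1)*(1-e)"
    unfolding mu_def s using am a1 by (simp add: algebra_simps)
  have muk: "mu p c b1 b2 b3 k = (inverse X - 1)*(1 - a1*e*X)"
    unfolding mu_def s X_def by simp
  have nuk: "nu p b1 b2 b3 (Suc k) = (1 - inverse (p*X))*(1-b1*X)*(1-b2*X)*(1-b3*X)"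
    unfolding nu_def X_def by simp
  have RA: "coefA p a1 e b1 b2 b3 (Suc k) = coefA p a1 e b1 b2 b3 k *
      ((1-a1*X)*(1-e*X)*p/((1-b1*X)*(1-b2*X)*(1-b3*X)*(1-p*X)))"
    unfolding coefA_def qpoch_Suc X_def using d p0 by (simp add: field_simps)
  have RB: "((1-a1*X)*(1-e*X)*p/((1-b1*X)*(1-b2*X)*(1-b3*X)*(1-p*X))) * nu p b1 b2 b3 (Suc k)
     = -(1-a1*X)*(1-e*X)/X"
  proof -
    have d': "1-b1*X \<noteq> 0" "1-b2*X \<noteq> 0" "1-b3*X \<noteq> 0" "1-p*X \<noteq> 0" using d unfolding X_def by (auto simp: mult.commute)
    have "((1-a1*X)*(1-e*X)*p/((1-b1*X)*(1-b2*X)*(1-b3*X)*(1-p*X))) * nu p b1 b2 b3 (Suc k)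
      = (1-a1*X)*(1-e*X)*p*(1 - inverse (p*X))/(1-p*X)"
      unfolding nuk by (rule canc4[OF d'])
    also have "\<dots> = -(1-a1*X)*(1-e*X)/X" using d' p0 X0 by (simp add: field_simps; simp add: algebra_simps)
    finally show ?thesis .
  qed
  have "coefA p a1 e b1 b2 b3 (Suc k) * nu p b1 b2 b3 (Suc k) = coefA p a1 e b1 b2 b3 k *
      (-(1-a1*X)*(1-e*X)/X)" by (subst RA, subst mult.assoc, subst RB, rule refl)
  also have "\<dots> = (mu p c b1 b2 b3 m - mu p c b1 b2 b3 k) * coefA p a1 e b1 b2 b3 k"
    unfolding rec_poly[OF X0] mum muk by simp
  finally show ?thesis .
qed

lemma opr_sum:
  fixes a :: "nat \<Rightarrow> complex" and p c b1 b2 b3 u :: complex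
  shows "opr p c b1 b2 b3 (\<lambda>v. \<Sum>k\<le>M. a k * f k v) u = (\<Sum>k\<le>M. a k * opr p c b1 b2 b3 (f k) u)"
proof -
  have "(\<Sum>k\<le>M. a k * opr p c b1 b2 b3 (f k) u) = (\<Sum>k\<le>M. Bop p c b1 b2 b3 u * (a k * f k (u/p) - a k * f k u) + Dop p c b1 b2 b3 u * (a k * f k (p*u) - a k * f k u))"
    unfolding opr_def by (intro sum.cong refl) (simp add: ring_distribs mult_ac)
  also have "\<dots> = opr p c b1 b2 b3 (\<lambda>v. \<Sum>k\<le>M. a k * f k v) u"
    unfolding opr_def sum.distrib sum_distrib_left[symmetric] sum_subtractf ..
  finally show ?thesis by simp
qed

lemma eigen_sum:
  fixes p c b1 b2 b3 u lam :: complex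
  assumes op: "\<And>k. opr p c b1 b2 b3 (phib p c k) u = mu p c b1 b2 b3 k * phib p c k u + nu p b1 b2 b3 k * phib p c (k-1) u"
    and rec: "\<And>k. k < M \<Longrightarrow> a (Suc k) * nu p b1 b2 b3 (Suc k) = (lam - mu p c b1 b2 b3 k) * a k"
    and top: "(lam - mu p c b1 b2 b3 M) * a M * phib p c M u = 0"
  shows "opr p c b1 b2 b3 (\<lambda>v. \<Sum>k\<le>M. a k * phib p c k v) u = lam * (\<Sum>k\<le>M. a k * phib p c k u)"
proof -
  let ?mu = "mu p c b1 b2 b3" and ?nu = "nu p b1 b2 b3" and ?f = "\<lambda>k. phib p c k u"
  have nu0: "?nu 0 = 0" by (simp add: nu_def)
  have A: "(\<Sum>k\<le>M. a k * (?nu k * ?f (k-1))) = (\<Sum>k<M. a (Suc k) * ?nu (Suc k) * ?f k)"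
  proof (cases M)
    case 0 then show ?thesis using nu0 by simp
  next
    case (Suc M')
    show ?thesis unfolding Suc sum.atMost_Suc_shift using nu0 lessThan_Suc_atMost
      by (simp add: algebra_simps)
  qed
  have B: "(\<Sum>k<M. a (Suc k) * ?nu (Suc k) * ?f k) = (\<Sum>k<M. (lam - ?mu k) * a k * ?f k)"
    using rec by (intro sum.cong) auto
  have "opr p c b1 b2 b3 (\<lambda>v. \<Sum>k\<le>M. a k * phib p c k v) u
      = (\<Sum>k\<le>M. a k * ?mu k * ?f k) + (\<Sum>k\<le>M. a k * (?nu k * ?f (k-1)))"
    unfolding opr_sum op by (simp add: sum.distrib algebra_simps)
  also have "\<dots> = (\<Sum>k\<le>M. a k * ?mu k * ?f k) + (\<Sum>k<M. (lam - ?mu k) * a k * ?f k)"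
    unfolding A B ..
  also have "\<dots> = (\<Sum>k\<le>M. lam * (a k * ?f k)) - (lam - ?mu M) * a M * ?f M"
    unfolding lessThan_Suc_atMost[symmetric] sum.lessThan_Suc by (simp add: algebra_simps sum.distrib sum_subtractf)
  also have "\<dots> = lam * (\<Sum>k\<le>M. a k * ?f k)" using top by (simp add: sum_distrib_left)
  finally show ?thesis .
qed

lemma qpoch_zero:
  assumes "(p::complex) \<noteq> 0" "K < k"
  shows "qpoch (inverse (p^K)) p k = 0"
proof -
  have "K \<in> {..<k}" using assms by simp
  moreover have "1 - inverse (p^K) * p^K = 0" using assms by simp
  ultimately show ?thesis unfolding qpoch_def by (intro prod_zero) auto
qed

lemma phi43_eq_sum:
  fixes a1 a2 a3 a4 b1 b2 b3 p :: complex
  assumes p0: "p \<noteq> 0"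
    and PK0: "a1 = inverse (p^K0) \<or> a2 = inverse (p^K0) \<or> a3 = inverse (p^K0) \<or> a4 = inverse (p^K0)"
    and KM: "K0 \<le> M"
  shows "phi43_term a1 a2 a3 a4 b1 b2 b3 p = (\<Sum>k\<le>M. (qpoch a1 p k * qpoch a2 p k * qpoch a3 p k * qpoch a4 p k)
               / (qpoch b1 p k * qpoch b2 p k * qpoch b3 p k * qpoch p p k) * p ^ k)"
proof -
  define P where "P = (\<lambda>K::nat. a1 = inverse (p ^ K) \<or> a2 = inverse (p ^ K) \<or> a3 = inverse (p ^ K) \<or> a4 = inverse (p ^ K))"
  define K where "K = (LEAST K. P K)"
  have PK: "P K" unfolding K_def by (rule LeastI[of P K0]) (use PK0 in \<open>simp add: P_def\<close>)
  have KK0: "K \<le> K0" unfolding K_def by (rule Least_le) (use PK0 in \<open>simp add: P_def\<close>)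
  let ?t = "\<lambda>k. (qpoch a1 p k * qpoch a2 p k * qpoch a3 p k * qpoch a4 p k)
               / (qpoch b1 p k * qpoch b2 p k * qpoch b3 p k * qpoch p p k) * p ^ k"
  have z: "?t k = 0" if "K < k" for k
    using PK qpoch_zero[OF p0 that] unfolding P_def by auto
  have "phi43_term a1 a2 a3 a4 b1 b2 b3 p = (\<Sum>k\<le>K. ?t k)"
    unfolding phi43_term_def K_def P_def Let_def ..
  also have "\<dots> = (\<Sum>k\<le>M. ?t k)"
    by (rule sum.mono_neutral_left) (use KK0 KM z in auto)
  finally show ?thesis .
qed

lemma qpow_add: "qpow q (a + b) = qpow q a * qpow q b"
  unfolding qpow_def by (simp add: distrib_right exp_add)

lemma qpow_one: "0 < q \<Longrightarrow> qpow q 1 = complex_of_real q"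
  unfolding qpow_def by (simp add: exp_of_real)

lemma qpow_nat: "0 < q \<Longrightarrow> qpow q (of_nat m) = complex_of_real q ^ m"
  unfolding qpow_def by (simp add: exp_of_nat_mult exp_of_real)

lemma qpow_nz: "qpow q a \<noteq> 0" unfolding qpow_def by simp

lemma qpow_neg: "qpow q (-a) = inverse (qpow q a)"
  unfolding qpow_def by (simp add: exp_minus)

lemma qpow_x1: "0 < q \<Longrightarrow> qpow q (x + 1) = complex_of_real q / qpow q (-x)"
  by (simp add: qpow_add qpow_one qpow_neg field_simps qpow_nz)

lemma qpow_m2x: "qpow q (- 2 * x) = (qpow q (-x))^2"
proof -
  have "- 2 * x = (-x) + (-x)" by simp
  then show ?thesis by (simp only: qpow_add power2_eq_square)
qed

lemma qpow_2x2: "0 < q \<Longrightarrow> qpow q (2 * x + 2) = (complex_of_real q)^2 / (qpow q (-x))^2"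
proof -
  assume q: "0 < q"
  have "2 * x + 2 = (x + 1) + (x + 1)" by simp
  then have "qpow q (2 * x + 2) = qpow q (x+1) * qpow q (x+1)" by (simp only: qpow_add)
  then show ?thesis using q by (simp add: qpow_x1 power2_eq_square)
qed

definition LS where
  "LS q N n g z = (\<Sum>k\<le>N. coefA (complex_of_real q) (inverse (complex_of_real q^(2*n))) (inverse (complex_of_real q^(2*(N-n)+1)))
      (inverse (complex_of_real q^N)) (- inverse (complex_of_real q^N)) (g*complex_of_real q) k
      * phib (complex_of_real q) (-g*complex_of_real q) k z)"

definition RS where
  "RS q N n g z = (\<Sum>k\<le>n. coefA ((complex_of_real q)^2) (inverse (complex_of_real q^(2*n))) (inverse (complex_of_real q^(2*(N-n)+1)))
      (inverse (complex_of_real q^(2*N))) (g*complex_of_real q) (g*complex_of_real q^2) k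
      * phib ((complex_of_real q)^2) (g^2*(complex_of_real q)^2) k (z^2))"

lemma L_eq_LS:
  fixes q :: real and x :: complex
  assumes q: "0 < q" and K: "K0 \<le> N"
    and P: "inverse (complex_of_real q ^ (2 * n)) = inverse (complex_of_real q^K0) \<or> qpow q (- x) = inverse (complex_of_real q^K0)"
  shows "phi43_term
              (inverse (complex_of_real q ^ (2 * n))) (inverse (complex_of_real q ^ (2 * (N - n) + 1)))
              (qpow q (- x)) (- g * qpow q (x + 1))
              (inverse (complex_of_real q ^ N)) (- inverse (complex_of_real q ^ N)) (g * complex_of_real q) (complex_of_real q)
         = LS q N n g (qpow q (-x))"
proof -
  let ?Q = "complex_of_real q"
  have Q0: "?Q \<noteq> 0" using q by simp
  have a4: "- g * qpow q (x + 1) = (-g * ?Q) / qpow q (-x)" using q by (simp add: qpow_x1)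
  have S: "phi43_term
              (inverse (?Q ^ (2 * n))) (inverse (?Q ^ (2 * (N - n) + 1)))
              (qpow q (- x)) (- g * qpow q (x + 1))
              (inverse (?Q ^ N)) (- inverse (?Q ^ N)) (g * ?Q) ?Q
      = (\<Sum>k\<le>N. (qpoch (inverse (?Q ^ (2 * n))) ?Q k * qpoch (inverse (?Q ^ (2 * (N - n) + 1))) ?Q k
          * qpoch (qpow q (- x)) ?Q k * qpoch (- g * qpow q (x + 1)) ?Q k)
          / (qpoch (inverse (?Q ^ N)) ?Q k * qpoch (- inverse (?Q ^ N)) ?Q k * qpoch (g * ?Q) ?Q k * qpoch ?Q ?Q k) * ?Q ^ k)"
    by (rule phi43_eq_sum[OF Q0 _ K]) (use P in auto)
  show ?thesis
    unfolding S LS_def unfolding a4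
    by (intro sum.cong refl) (simp add: coefA_def phib_def field_simps)
qed


lemma R_eq_RS:
  fixes q :: real and x :: complex
  assumes q: "0 < q"
  shows "phi43_term
              (inverse (complex_of_real q ^ (2 * n))) (inverse (complex_of_real q ^ (2 * (N - n) + 1)))
              (qpow q (- 2 * x)) (g ^ 2 * qpow q (2 * x + 2))
              (inverse (complex_of_real q ^ (2 * N))) (g * complex_of_real q) (g * complex_of_real q ^ 2) (complex_of_real q ^ 2)
         = RS q N n g (qpow q (-x))"
proof -
  let ?Q = "complex_of_real q"
  have Q0: "?Q^2 \<noteq> 0" using q by simp
  have a3: "qpow q (- 2 * x) = (qpow q (-x))^2" by (rule qpow_m2x)
  have a4: "g ^ 2 * qpow q (2 * x + 2) = (g^2 * ?Q^2) / (qpow q (-x))^2" using q by (simp add: qpow_2x2)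
  have a1: "inverse (?Q ^ (2 * n)) = inverse ((?Q^2)^n)" by (simp add: power_mult)
  have S: "phi43_term
              (inverse (?Q ^ (2 * n))) (inverse (?Q ^ (2 * (N - n) + 1)))
              (qpow q (- 2 * x)) (g ^ 2 * qpow q (2 * x + 2))
              (inverse (?Q ^ (2 * N))) (g * ?Q) (g * ?Q ^ 2) (?Q ^ 2)
      = (\<Sum>k\<le>n. (qpoch (inverse (?Q ^ (2 * n))) (?Q^2) k * qpoch (inverse (?Q ^ (2 * (N - n) + 1))) (?Q^2) k
          * qpoch (qpow q (- 2 * x)) (?Q^2) k * qpoch (g ^ 2 * qpow q (2 * x + 2)) (?Q^2) k)
          / (qpoch (inverse (?Q ^ (2 * N))) (?Q^2) k * qpoch (g * ?Q) (?Q^2) k * qpoch (g * ?Q ^ 2) (?Q^2) k * qpoch (?Q^2) (?Q^2) k) * (?Q^2) ^ k)"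
    by (rule phi43_eq_sum[OF Q0 _ order.refl]) (use a1 in auto)
  show ?thesis
    unfolding S RS_def unfolding a3 a4
    by (intro sum.cong refl) (simp add: coefA_def phib_def field_simps)
qed

lemma img2: "Im g \<noteq> 0 \<Longrightarrow> Im (g^2) = 0 \<Longrightarrow> Re (g^2) < 0"
  by (auto simp: power2_eq_square zero_less_mult_iff linorder_neq_iff)

lemma g2_ne: "Im g \<noteq> 0 \<Longrightarrow> 0 < s \<Longrightarrow> 0 \<le> t \<Longrightarrow> g^2 * complex_of_real s \<noteq> complex_of_real t"
proof
  assume a: "Im g \<noteq> 0" "0 < s" "0 \<le> t" "g^2 * complex_of_real s = complex_of_real t"
  then have "g^2 = complex_of_real (t/s)" by (simp add: field_simps)
  then have "Im (g^2) = 0" "Re (g^2) = t/s" by simp_all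
  moreover have "0 \<le> t/s" using a(2,3) by simp
  ultimately show False using img2[OF a(1)] by simp
qed

lemma g1_ne: "Im g \<noteq> 0 \<Longrightarrow> s \<noteq> 0 \<Longrightarrow> g * complex_of_real s \<noteq> complex_of_real t"
  by (auto simp: complex_eq_iff)

lemma pow_lt_ne: "0 < q \<Longrightarrow> q < 1 \<Longrightarrow> j < N \<Longrightarrow> (q::real)^j \<noteq> q^N"
  by (metis less_irrefl power_strict_decreasing)

lemma canB: "A \<noteq> 0 \<Longrightarrow> B \<noteq> 0 \<Longrightarrow> (n1::complex)*A*B*n4/((A*a)*(B*b)) = n1*n4/(a*b)"
  by (simp add: field_simps)
lemma BopM:
  fixes u T g Qc :: complex
  assumes "u \<noteq> 0" "Qc \<noteq> 0" "1 - g*Qc/u^2 \<noteq> 0" "1 - g*Qc^2/u^2 \<noteq> 0"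
  shows "Bop Qc (-g*Qc) T (-T) (g*Qc) u = Bop (Qc^2) (g^2*Qc^2) (T^2) (g*Qc) (g*Qc^2) (u^2)"
proof -
  define w where "w = u^2"
  have w0: "w \<noteq> 0" using assms by (simp add: w_def)
  have A: "1 - g*Qc/w \<noteq> 0" "1 - g*Qc^2/w \<noteq> 0" using assms by (simp_all add: w_def)
  have L: "Bop Qc (-g*Qc) T (-T) (g*Qc) u = (1 - T^2/w)*(1-g^2*Qc^2/w)/((1+g*Qc/w)*(1+g*Qc^2/w))"
    unfolding Bop_def w_def using assms by (simp add: field_simps power2_eq_square)
  have e1: "1 - g^2*Qc^2/w^2 = (1 - g*Qc/w)*(1+g*Qc/w)" "1 - g^2*Qc^2*Qc^2/w^2 = (1 - g*Qc^2/w)*(1+g*Qc^2/w)"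
    using w0 by (simp_all add: field_simps power2_eq_square)
  have R: "Bop (Qc^2) (g^2*Qc^2) (T^2) (g*Qc) (g*Qc^2) w = (1 - T^2/w)*(1-g^2*Qc^2/w)/((1+g*Qc/w)*(1+g*Qc^2/w))"
    unfolding Bop_def e1 by (rule canB[OF A])
  show ?thesis using L R by (simp add: w_def)
qed
lemma canD:
  assumes "A \<noteq> 0" "B \<noteq> 0" "X*Y = K'*A*B"
  shows "(n1::complex)*X*Y*n4/(K*(A*a)*(B*b)) = n1*K'*n4/(K*a*b)"
proof -
  have e1: "n1*X*Y*n4 = (n1*K'*n4)*(A*B)" using assms(3) by (simp add: ac_simps)
  have e2: "K*(A*a)*(B*b) = (K*a*b)*(A*B)" by (simp add: ac_simps)
  have AB: "A*B \<noteq> 0" using assms(1,2) by simp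
  show ?thesis unfolding e1 e2 by (rule mult_divide_mult_cancel_right[OF AB])
qed
lemma canL: "(g::complex) \<noteq> 0 \<Longrightarrow> Qc \<noteq> 0 \<Longrightarrow> n1*(g*Qc*p1)*(-m)/((-g)*Qc*Qc*a*b) = n1*p1*m/(Qc*a*b)"
  by (simp add: field_simps)
lemma canE: "(g::complex) \<noteq> 0 \<Longrightarrow> Qc \<noteq> 0 \<Longrightarrow> n1*(g^2*Qc^3)*M/(g^2*Qc^2*Qc^2*a*b) = n1*M/(Qc*a*b)"
  by (cases "a = 0 \<or> b = 0") (auto simp: field_simps power2_eq_square power3_eq_cube)
lemma DopM:
  fixes u T g Qc :: complex
  assumes "u \<noteq> 0" "Qc \<noteq> 0" "g \<noteq> 0" "1 - g/u^2 \<noteq> 0" "1 - g*Qc/u^2 \<noteq> 0"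
  shows "Dop Qc (-g*Qc) T (-T) (g*Qc) u = Dop (Qc^2) (g^2*Qc^2) (T^2) (g*Qc) (g*Qc^2) (u^2)"
proof -
  define w where "w = u^2"
  have w0: "w \<noteq> 0" using assms by (simp add: w_def)
  have A: "1 - g/w \<noteq> 0" "1 - g*Qc/w \<noteq> 0" using assms by (simp_all add: w_def)
  have l1: "g*Qc - (-g*Qc)/u = (g*Qc)*(1+1/u)" "(-T - (-g*Qc)/u)*(T - (-g*Qc)/u) = -(T^2 - g^2*Qc^2/w)"
     "1 - (-g*Qc)/(Qc*u^2) = 1+g/w" "1 - (-g*Qc)/u^2 = 1+g*Qc/w"
    unfolding w_def using assms by (simp add: field_simps, simp add: field_simps power2_eq_square algebra_simps,
       simp add: field_simps power2_eq_square, simp add: field_simps power2_eq_square)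
  have L: "Dop Qc (-g*Qc) T (-T) (g*Qc) u = (1-1/u)*(1+1/u)*(T^2 - g^2*Qc^2/w)/(Qc*(1+g/w)*(1+g*Qc/w))"
  proof -
    have "Dop Qc (-g*Qc) T (-T) (g*Qc) u = (1-1/u)*((g*Qc)*(1+1/u))*((-T - (-g*Qc)/u)*(T - (-g*Qc)/u))/((-g*Qc)*Qc*(1+g/w)*(1+g*Qc/w))"
      unfolding Dop_def l1(1) l1(3) l1(4) by (simp add: mult.assoc)
    also have "\<dots> = (1-1/u)*(1+1/u)*(T^2 - g^2*Qc^2/w)/(Qc*(1+g/w)*(1+g*Qc/w))"
      unfolding l1(2) by (rule canL) (use assms in simp_all)
    finally show ?thesis .
  qed
  have e11: "1 - g^2*Qc^2/(Qc^2*w^2) = (1 - g/w)*(1+g/w)"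
    using w0 assms by (simp add: field_simps power2_eq_square)
  have e12: "1 - g^2*Qc^2/w^2 = (1 - g*Qc/w)*(1+g*Qc/w)"
    using w0 assms by (simp add: field_simps power2_eq_square)
  have e13: "(g*Qc^2 - g^2*Qc^2/w)*(g*Qc - g^2*Qc^2/w) = (g^2*Qc^3)*(1-g/w)*(1-g*Qc/w)"
    using w0 assms by (simp add: field_simps power2_eq_square power3_eq_cube)
  note e1 = e11 e12 e13
  have R: "Dop (Qc^2) (g^2*Qc^2) (T^2) (g*Qc) (g*Qc^2) w = (1-1/w)*(g^2*Qc^3)*(T^2 - g^2*Qc^2/w)/(g^2*Qc^2*Qc^2*(1+g/w)*(1+g*Qc/w))"
    unfolding Dop_def e1(1,2) by (rule canD[OF A e1(3)])
  also have "\<dots> = (1-1/u)*(1+1/u)*(T^2 - g^2*Qc^2/w)/(Qc*(1+g/w)*(1+g*Qc/w))"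
  proof -
    have e: "1 - 1/w = (1-1/u)*(1+1/u)" using assms by (simp add: w_def field_simps power2_eq_square)
    show ?thesis unfolding canE[OF assms(3,2)] e ..
  qed
  finally show ?thesis using L by (simp add: w_def)
qed

context
  fixes q :: real and N n :: nat and g :: complex
  assumes q0: "0 < q" and q1: "q < 1" and nN: "n \<le> N" and img: "Im g \<noteq> 0"
begin

abbreviation "Qc \<equiv> complex_of_real q"

lemma Q0: "Qc \<noteq> 0" using q0 by simp
lemma g0: "g \<noteq> 0" using img by auto

lemma ofr: "Qc^k = complex_of_real (q^k)" "inverse (Qc^k) = complex_of_real (inverse (q^k))"
  by simp_all

lemma condL:
  "(inverse (Qc^x))^2 \<noteq> -g*Qc" "(inverse (Qc^x))^2 \<noteq> (-g*Qc)*Qc" "Qc*(inverse (Qc^x))^2 \<noteq> -g*Qc"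
proof -
  have "-g*Qc = g * complex_of_real (-q)" "(-g*Qc)*Qc = g * complex_of_real (-q*q)" by simp_all
  moreover have "(inverse (Qc^x))^2 = complex_of_real ((inverse (q^x))^2)" "Qc*(inverse (Qc^x))^2 = complex_of_real (q*(inverse (q^x))^2)" by simp_all
  ultimately show "(inverse (Qc^x))^2 \<noteq> -g*Qc" "(inverse (Qc^x))^2 \<noteq> (-g*Qc)*Qc" "Qc*(inverse (Qc^x))^2 \<noteq> -g*Qc"
    using g1_ne[OF img] q0 by (metis mult_eq_0_iff neg_0_equal_iff_equal less_irrefl)+
qed

lemma condR:
  "((inverse (Qc^x))^2)^2 \<noteq> g^2*Qc^2" "((inverse (Qc^x))^2)^2 \<noteq> (g^2*Qc^2)*Qc^2" "Qc^2*((inverse (Qc^x))^2)^2 \<noteq> g^2*Qc^2"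
proof -
  have e: "g^2*Qc^2 = g^2 * complex_of_real (q^2)" "(g^2*Qc^2)*Qc^2 = g^2 * complex_of_real (q^2*q^2)" by simp_all
  have f: "((inverse (Qc^x))^2)^2 = complex_of_real (((inverse (q^x))^2)^2)"
    "Qc^2*((inverse (Qc^x))^2)^2 = complex_of_real (q^2*((inverse (q^x))^2)^2)" by simp_all
  show "((inverse (Qc^x))^2)^2 \<noteq> g^2*Qc^2" "((inverse (Qc^x))^2)^2 \<noteq> (g^2*Qc^2)*Qc^2" "Qc^2*((inverse (Qc^x))^2)^2 \<noteq> g^2*Qc^2"
    unfolding f(2) unfolding f(1) e(2) unfolding e(1) using g2_ne[OF img] q0 by (metis zero_le_power2 zero_less_power2 mult_nonneg_nonneg less_irrefl zero_le_mult_iff zero_less_mult_iff)+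
qed


lemma nz_inv: "j < M \<Longrightarrow> 1 - inverse (Qc^M) * Qc^j \<noteq> 0"
proof
  assume j: "j < M" and h: "1 - inverse (Qc^M) * Qc^j = 0"
  then have "Qc^j = Qc^M" using Q0 by (simp add: field_simps)
  then have "q^j = q^M" by (metis of_real_eq_iff of_real_power)
  with pow_lt_ne[OF q0 q1 j] show False by simp
qed

lemma nz_ninv: "1 - (- inverse (Qc^M)) * Qc^j \<noteq> 0"
proof -
  have "1 - (- inverse (Qc^M)) * Qc^j = complex_of_real (1 + q^j / q^M)" by (simp add: field_simps)
  moreover have "1 + q^j / q^M > 0" using q0 by (simp add: add_pos_nonneg)
  ultimately show ?thesis by (metis of_real_eq_0_iff less_irrefl)
qed

lemma nz_g: "1 - g * Qc^k * Qc^j \<noteq> 0"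
proof -
  have "g * Qc^k * Qc^j = g * complex_of_real (q^k*q^j)" by simp
  moreover have "q^k*q^j \<noteq> 0" using q0 by simp
  ultimately show ?thesis using g1_ne[OF img, of "q^k*q^j" 1] by (metis eq_iff_diff_eq_0 of_real_1)
qed

lemma nz_g1: "1 - g * Qc * Qc^j \<noteq> 0" using nz_g[of 1 j] by simp

lemma nz_Q: "1 - Qc^k * Qc^j \<noteq> 0" if k0: "0 < k"
proof -
  obtain m where m: "k + j = Suc m" using k0 by (cases "k+j") auto
  have "q^k*q^j < 1" unfolding power_add[symmetric] m using power_Suc_less_one[OF q0 q1] .
  then have "Qc^k*Qc^j \<noteq> 1" by (metis of_real_1 of_real_eq_iff of_real_mult of_real_power less_irrefl)
  then show ?thesis by simp
qed

lemma nz_Q1: "1 - Qc * Qc^j \<noteq> 0" using nz_Q[of 1 j] by simp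

lemma qpoch_nz: "(\<And>j. j < k \<Longrightarrow> 1 - x * p^j \<noteq> 0) \<Longrightarrow> qpoch x p k \<noteq> 0"
  unfolding qpoch_def by (simp add: prod_zero_iff)

lemma balL: "inverse (Qc^N) * (- inverse (Qc^N)) * (g*Qc) = Qc * inverse (Qc^(2*n)) * inverse (Qc^(2*(N-n)+1)) * (-g*Qc)"
proof -
  have ex: "2*n + (2*(N-n)+1) = Suc (N+N)" using nN by simp
  have "Qc^(2*n) * Qc^(2*(N-n)+1) = Qc*Qc^N*Qc^N"
    unfolding power_add[symmetric] ex by (simp add: power_add)
  then show ?thesis using Q0 by (simp add: field_simps)
qed

lemma balR: "inverse (Qc^(2*N)) * (g*Qc) * (g*Qc^2) = Qc^2 * inverse (Qc^(2*n)) * inverse (Qc^(2*(N-n)+1)) * (g^2*Qc^2)"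
proof -
  have ex: "2*n + (2*(N-n)+1) = Suc (2*N)" using nN by simp
  have "Qc^(2*n) * Qc^(2*(N-n)+1) = Qc*Qc^(2*N)"
    unfolding power_add[symmetric] ex by simp
  then show ?thesis using Q0 by (simp add: field_simps power2_eq_square)
qed


lemma u0: "inverse (Qc^x) \<noteq> 0" using Q0 by simp

lemma eigL:
  assumes x: "x < N"
  shows "opr Qc (-g*Qc) (inverse (Qc^N)) (- inverse (Qc^N)) (g*Qc) (LS q N n g) (inverse (Qc^x))
     = mu Qc (-g*Qc) (inverse (Qc^N)) (- inverse (Qc^N)) (g*Qc) (2*n) * LS q N n g (inverse (Qc^x))"
proof -
  have LSe: "LS q N n g = (\<lambda>v. \<Sum>k\<le>N. coefA Qc (inverse (Qc^(2*n))) (inverse (Qc^(2*(N-n)+1)))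
      (inverse (Qc^N)) (- inverse (Qc^N)) (g*Qc) k * phib Qc (-g*Qc) k v)"
    by (rule ext) (simp add: LS_def)
  have c0: "-g*Qc \<noteq> 0" using g0 Q0 by simp
  show ?thesis unfolding LSe
  proof (rule eigen_sum)
    fix k
    show "opr Qc (-g*Qc) (inverse (Qc^N)) (- inverse (Qc^N)) (g*Qc) (phib Qc (-g*Qc) k) (inverse (Qc^x)) =
      mu Qc (-g*Qc) (inverse (Qc^N)) (- inverse (Qc^N)) (g*Qc) k * phib Qc (-g*Qc) k (inverse (Qc^x)) +
      nu Qc (inverse (Qc^N)) (- inverse (Qc^N)) (g*Qc) k * phib Qc (-g*Qc) (k-1) (inverse (Qc^x))"
      by (rule opr_phib[OF Q0 c0 u0 condL])
  next
    fix k assume k: "k < N"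
    show "coefA Qc (inverse (Qc^(2*n))) (inverse (Qc^(2*(N-n)+1))) (inverse (Qc^N)) (- inverse (Qc^N)) (g*Qc) (Suc k) *
        nu Qc (inverse (Qc^N)) (- inverse (Qc^N)) (g*Qc) (Suc k) =
        (mu Qc (-g*Qc) (inverse (Qc^N)) (- inverse (Qc^N)) (g*Qc) (2*n) - mu Qc (-g*Qc) (inverse (Qc^N)) (- inverse (Qc^N)) (g*Qc) k) *
        coefA Qc (inverse (Qc^(2*n))) (inverse (Qc^(2*(N-n)+1))) (inverse (Qc^N)) (- inverse (Qc^N)) (g*Qc) k"
    proof (rule coefA_rec[OF Q0 c0 refl balL])
      show "qpoch (inverse (Qc^N)) Qc (Suc k) \<noteq> 0" using k by (intro qpoch_nz nz_inv) simp
      show "qpoch (- inverse (Qc^N)) Qc (Suc k) \<noteq> 0" by (intro qpoch_nz nz_ninv)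
      show "qpoch (g*Qc) Qc (Suc k) \<noteq> 0" by (intro qpoch_nz nz_g1)
      show "qpoch Qc Qc (Suc k) \<noteq> 0" by (intro qpoch_nz nz_Q1)
    qed
  next
    have "phib Qc (-g*Qc) N (inverse (Qc^x)) = 0"
      unfolding phib_def using qpoch_zero[OF Q0 x] by simp
    then show "(mu Qc (-g*Qc) (inverse (Qc^N)) (- inverse (Qc^N)) (g*Qc) (2*n) - mu Qc (-g*Qc) (inverse (Qc^N)) (- inverse (Qc^N)) (g*Qc) N) *
      coefA Qc (inverse (Qc^(2*n))) (inverse (Qc^(2*(N-n)+1))) (inverse (Qc^N)) (- inverse (Qc^N)) (g*Qc) N *
      phib Qc (-g*Qc) N (inverse (Qc^x)) = 0" by simp
  qed
qed

definition "RSw w = (\<Sum>k\<le>n. coefA (Qc^2) (inverse (Qc^(2*n))) (inverse (Qc^(2*(N-n)+1)))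
      (inverse (Qc^(2*N))) (g*Qc) (g*Qc^2) k * phib (Qc^2) (g^2*Qc^2) k w)"

lemma RS_RSw: "RS q N n g z = RSw (z^2)"
  by (simp add: RS_def RSw_def)

lemma eigR:
  shows "opr (Qc^2) (g^2*Qc^2) (inverse (Qc^(2*N))) (g*Qc) (g*Qc^2) RSw ((inverse (Qc^x))^2)
     = mu (Qc^2) (g^2*Qc^2) (inverse (Qc^(2*N))) (g*Qc) (g*Qc^2) n * RSw ((inverse (Qc^x))^2)"
proof -
  have RSe: "RSw = (\<lambda>w. \<Sum>k\<le>n. coefA (Qc^2) (inverse (Qc^(2*n))) (inverse (Qc^(2*(N-n)+1)))
      (inverse (Qc^(2*N))) (g*Qc) (g*Qc^2) k * phib (Qc^2) (g^2*Qc^2) k w)"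
    by (rule ext) (simp add: RSw_def)
  have c0: "g^2*Qc^2 \<noteq> 0" using g0 Q0 by simp
  have p0: "Qc^2 \<noteq> 0" using Q0 by simp
  have w0: "(inverse (Qc^x))^2 \<noteq> 0" using Q0 by simp
  have a1: "inverse (Qc^(2*n)) = inverse ((Qc^2)^n)" by (simp add: power_mult)
  show ?thesis unfolding RSe
  proof (rule eigen_sum)
    fix k
    show "opr (Qc^2) (g^2*Qc^2) (inverse (Qc^(2*N))) (g*Qc) (g*Qc^2) (phib (Qc^2) (g^2*Qc^2) k) ((inverse (Qc^x))^2) =
      mu (Qc^2) (g^2*Qc^2) (inverse (Qc^(2*N))) (g*Qc) (g*Qc^2) k * phib (Qc^2) (g^2*Qc^2) k ((inverse (Qc^x))^2) +
      nu (Qc^2) (inverse (Qc^(2*N))) (g*Qc) (g*Qc^2) k * phib (Qc^2) (g^2*Qc^2) (k-1) ((inverse (Qc^x))^2)"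
      by (rule opr_phib[OF p0 c0 w0 condR])
  next
    fix k assume k: "k < n"
    show "coefA (Qc^2) (inverse (Qc^(2*n))) (inverse (Qc^(2*(N-n)+1))) (inverse (Qc^(2*N))) (g*Qc) (g*Qc^2) (Suc k) *
        nu (Qc^2) (inverse (Qc^(2*N))) (g*Qc) (g*Qc^2) (Suc k) =
        (mu (Qc^2) (g^2*Qc^2) (inverse (Qc^(2*N))) (g*Qc) (g*Qc^2) n - mu (Qc^2) (g^2*Qc^2) (inverse (Qc^(2*N))) (g*Qc) (g*Qc^2) k) *
        coefA (Qc^2) (inverse (Qc^(2*n))) (inverse (Qc^(2*(N-n)+1))) (inverse (Qc^(2*N))) (g*Qc) (g*Qc^2) k"
    proof (rule coefA_rec[OF p0 c0 a1 balR])
      show "qpoch (inverse (Qc^(2*N))) (Qc^2) (Suc k) \<noteq> 0"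
      proof (rule qpoch_nz)
        fix j assume "j < Suc k"
        then have "2*j < 2*N" using k nN by simp
        then show "1 - inverse (Qc^(2*N)) * (Qc^2)^j \<noteq> 0" using nz_inv[of "2*j" "2*N"] by (simp add: power_mult[symmetric])
      qed
      show "qpoch (g*Qc) (Qc^2) (Suc k) \<noteq> 0"
      proof (rule qpoch_nz)
        fix j show "1 - g*Qc * (Qc^2)^j \<noteq> 0" using nz_g1[of "2*j"] by (simp add: power_mult[symmetric])
      qed
      show "qpoch (g*Qc^2) (Qc^2) (Suc k) \<noteq> 0"
      proof (rule qpoch_nz)
        fix j show "1 - g*Qc^2 * (Qc^2)^j \<noteq> 0" using nz_g[of 2 "2*j"] by (simp add: power_mult[symmetric])
      qed
      show "qpoch (Qc^2) (Qc^2) (Suc k) \<noteq> 0"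
      proof (rule qpoch_nz)
        fix j show "1 - Qc^2 * (Qc^2)^j \<noteq> 0" using nz_Q[of 2 "2*j"] by (simp add: power_mult[symmetric])
      qed
    qed
  qed simp
qed

lemma lam_eq: "mu Qc (-g*Qc) (inverse (Qc^N)) (- inverse (Qc^N)) (g*Qc) (2*n) = mu (Qc^2) (g^2*Qc^2) (inverse (Qc^(2*N))) (g*Qc) (g*Qc^2) n"
proof -
  have e: "(Qc^2)^n = Qc^(2*n)" "Qc^(2*N) = Qc^N*Qc^N" by (simp_all add: power_mult[symmetric] mult_2 power_add)
  show ?thesis unfolding mu_def e using Q0 g0 by (simp add: field_simps power2_eq_square)
qed


lemma lin_ne: "1 + g * Qc^k \<noteq> 0" "1 - g * Qc^k \<noteq> 0" "1 + g * Qc * Qc^k \<noteq> 0" "1 - g * Qc * Qc^k \<noteq> 0"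
  using img q0 by (auto simp: complex_eq_iff simp flip: of_real_power)

lemma oprM:
  "opr Qc (-g*Qc) (inverse (Qc^N)) (- inverse (Qc^N)) (g*Qc) (\<lambda>v. F (v^2)) (inverse (Qc^x))
   = opr (Qc^2) (g^2*Qc^2) (inverse (Qc^(2*N))) (g*Qc) (g*Qc^2) F ((inverse (Qc^x))^2)"
proof -
  let ?u = "inverse (Qc^x)"
  have T2: "inverse (Qc^(2*N)) = (inverse (Qc^N))^2" by (simp add: power_mult power_inverse mult.commute)
  have c1: "1 - g*Qc/?u^2 \<noteq> 0" "1 - g*Qc^2/?u^2 \<noteq> 0" "1 - g/?u^2 \<noteq> 0"
  proof -
    have "g*Qc/?u^2 = g*Qc*Qc^(2*x)" "g*Qc^2/?u^2 = g*Qc*Qc*Qc^(2*x)" "g/?u^2 = g*Qc^(2*x)"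
      by (simp_all add: mult_2 power_add power2_eq_square divide_inverse)
    then show "1 - g*Qc/?u^2 \<noteq> 0" "1 - g*Qc^2/?u^2 \<noteq> 0" "1 - g/?u^2 \<noteq> 0"
      using lin_ne[of "2*x"] lin_ne[of "Suc (2*x)"] by (simp_all add: mult.assoc)
  qed
  show ?thesis unfolding opr_def T2
    using BopM[OF u0 Q0 c1(1,2), of "inverse (Qc^N)"] DopM[OF u0 Q0 g0 c1(3,1), of "inverse (Qc^N)"]
    by (simp add: power_divide power_mult_distrib)
qed

lemma opr_diff: "opr p c b1 b2 b3 f u - opr p c b1 b2 b3 h u = opr p c b1 b2 b3 (\<lambda>v. f v - h v) (u::complex)"
  unfolding opr_def by (simp add: algebra_simps)

lemma LS1: "LS q N n g 1 = 1"
proof -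
  let ?f = "\<lambda>k. coefA Qc (inverse (Qc^(2*n))) (inverse (Qc^(2*(N-n)+1)))
      (inverse (Qc^N)) (- inverse (Qc^N)) (g*Qc) k * phib Qc (-g*Qc) k 1"
  have "(\<Sum>k\<le>N. ?f k) = (\<Sum>k\<in>{0}. ?f k)"
    by (rule sum.mono_neutral_right) (use qpoch_zero[OF Q0, of 0] in \<open>auto simp: phib_def\<close>)
  then show ?thesis by (simp add: LS_def coefA_def phib_def qpoch_def)
qed

lemma RS1: "RS q N n g 1 = 1"
proof -
  have Q2: "Qc^2 \<noteq> 0" using Q0 by simp
  let ?f = "\<lambda>k. coefA (Qc^2) (inverse (Qc^(2*n))) (inverse (Qc^(2*(N-n)+1)))
      (inverse (Qc^(2*N))) (g*Qc) (g*Qc^2) k * phib (Qc^2) (g^2*Qc^2) k (1^2)"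
  have "(\<Sum>k\<le>n. ?f k) = (\<Sum>k\<in>{0}. ?f k)"
    by (rule sum.mono_neutral_right) (use qpoch_zero[OF Q2, of 0] in \<open>auto simp: phib_def\<close>)
  then show ?thesis by (simp add: RS_def coefA_def phib_def qpoch_def)
qed

lemma BopL_nz:
  assumes y: "y < N"
  shows "Bop Qc (-g*Qc) (inverse (Qc^N)) (- inverse (Qc^N)) (g*Qc) (inverse (Qc^y)) \<noteq> 0"
proof -
  let ?u = "inverse (Qc^y)"
  have f1: "1 - inverse (Qc^N)/?u \<noteq> 0" using nz_inv[OF y] by (simp add: divide_inverse)
  have f2: "1 - (- inverse (Qc^N))/?u \<noteq> 0" using nz_ninv[of N y] by (simp add: divide_inverse)
  have f3: "1 - g*Qc/?u \<noteq> 0" "1 - (-g*Qc)/?u \<noteq> 0" using lin_ne[of y] by (simp_all add: divide_inverse)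
  have f4: "1 - (-g*Qc)/?u^2 \<noteq> 0" "1 - (-g*Qc)*Qc/?u^2 \<noteq> 0"
  proof -
    have "(-g*Qc)/?u^2 = - (g*Qc*Qc^(2*y))" "(-g*Qc)*Qc/?u^2 = - (g*Qc*Qc^(Suc (2*y)))"
      by (simp_all add: mult_2 power_add power2_eq_square divide_inverse)
    then show "1 - (-g*Qc)/?u^2 \<noteq> 0" "1 - (-g*Qc)*Qc/?u^2 \<noteq> 0"
      using lin_ne[of "2*y"] lin_ne[of "Suc (2*y)"] by simp_all
  qed
  show ?thesis unfolding Bop_def using f1 f2 f3 f4 by simp
qed

lemma grid_generic: "x \<le> N \<Longrightarrow> LS q N n g (inverse (Qc^x)) = RS q N n g (inverse (Qc^x))"
proof -
  define Df where "Df v = LS q N n g v - RS q N n g v" for v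
  let ?lam = "mu Qc (-g*Qc) (inverse (Qc^N)) (- inverse (Qc^N)) (g*Qc) (2*n)"
  have E: "opr Qc (-g*Qc) (inverse (Qc^N)) (- inverse (Qc^N)) (g*Qc) Df (inverse (Qc^y)) = ?lam * Df (inverse (Qc^y))"
    if y: "y < N" for y
  proof -
    have RSe: "RS q N n g = (\<lambda>v. RSw (v^2))" by (rule ext) (simp add: RS_RSw)
    have "opr Qc (-g*Qc) (inverse (Qc^N)) (- inverse (Qc^N)) (g*Qc) Df (inverse (Qc^y))
      = opr Qc (-g*Qc) (inverse (Qc^N)) (- inverse (Qc^N)) (g*Qc) (LS q N n g) (inverse (Qc^y))
        - opr Qc (-g*Qc) (inverse (Qc^N)) (- inverse (Qc^N)) (g*Qc) (\<lambda>v. RSw (v^2)) (inverse (Qc^y))"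
      unfolding opr_diff Df_def RSe ..
    also have "\<dots> = ?lam * LS q N n g (inverse (Qc^y)) - ?lam * RSw ((inverse (Qc^y))^2)"
      unfolding eigL[OF y] oprM eigR lam_eq ..
    also have "\<dots> = ?lam * Df (inverse (Qc^y))" unfolding Df_def RS_RSw by (simp add: algebra_simps)
    finally show ?thesis .
  qed
  have main: "\<forall>y\<le>x. Df (inverse (Qc^y)) = 0" if "x \<le> N" for x
    using that
  proof (induction x)
    case 0 then show ?case by (simp add: Df_def LS1 RS1)
  next
    case (Suc y)
    then have yN: "y < N" and IH: "\<forall>z\<le>y. Df (inverse (Qc^z)) = 0" by auto
    note Ey = E[OF yN]
    have up: "inverse (Qc^y) / Qc = inverse (Qc^(Suc y))" by (simp add: field_simps)
    have dn: "Dop Qc (-g*Qc) (inverse (Qc^N)) (- inverse (Qc^N)) (g*Qc) (inverse (Qc^y)) *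
        (Df (Qc * inverse (Qc^y)) - Df (inverse (Qc^y))) = 0"
    proof (cases y)
      case 0 then show ?thesis by (simp add: Dop_def)
    next
      case (Suc y')
      have e: "Qc * inverse (Qc^y) = inverse (Qc^y')" using Q0 Suc by (simp add: field_simps)
      have "Df (inverse (Qc^y')) = 0" using IH Suc by simp
      moreover have "Df (inverse (Qc^y)) = 0" using IH by blast
      ultimately show ?thesis by (simp only: e) simp
    qed
    have h0: "Df (inverse (Qc^y)) = 0" using IH by blast
    let ?B = "Bop Qc (-g*Qc) (inverse (Qc^N)) (- inverse (Qc^N)) (g*Qc) (inverse (Qc^y))"
    let ?D = "Dop Qc (-g*Qc) (inverse (Qc^N)) (- inverse (Qc^N)) (g*Qc) (inverse (Qc^y))"
    have "?B * (Df (inverse (Qc^(Suc y))) - Df (inverse (Qc^y))) + ?D * (Df (Qc * inverse (Qc^y)) - Df (inverse (Qc^y)))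
       = ?lam * Df (inverse (Qc^y))" using Ey unfolding opr_def up .
    then have "?B * Df (inverse (Qc^(Suc y))) + ?D * (Df (Qc * inverse (Qc^y)) - Df (inverse (Qc^y))) = 0"
      unfolding h0 by simp
    then have "Bop Qc (-g*Qc) (inverse (Qc^N)) (- inverse (Qc^N)) (g*Qc) (inverse (Qc^y)) * Df (inverse (Qc^(Suc y))) = 0"
      unfolding dn by simp
    with BopL_nz[OF yN] have "Df (inverse (Qc^(Suc y))) = 0" by simp
    with IH show ?case by (auto simp: le_Suc_eq)
  qed
  assume "x \<le> N"
  with main show ?thesis unfolding Df_def by auto
qed

end

context
  fixes q :: real and N n :: nat and g :: complex
  assumes q0: "0 < q" and q1: "q < 1" and nN: "n \<le> N" and img: "Im g \<noteq> 0"
begin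

abbreviation "Qd \<equiv> complex_of_real q"

definition "linp j = [:1 + (-g*Qd)*Qd^(2*j), -(Qd^j):]"
definition "linm j = [:1 + (-g*Qd)*Qd^(2*j), Qd^j:]"

lemma phiL_poly: "z \<noteq> 0 \<Longrightarrow> phib Qd (-g*Qd) k z = poly (\<Prod>j<k. linp j) (z + (-g*Qd)/z)"
  unfolding phib_def qpoch_def poly_prod prod.distrib[symmetric]
  by (intro prod.cong refl) (simp add: linp_def field_simps power_mult power2_eq_square mult_2 power_add)

lemma phiR_poly: "z \<noteq> 0 \<Longrightarrow> phib (Qd^2) (g^2*Qd^2) k (z^2) = poly (\<Prod>j<k. linp j * linm j) (z + (-g*Qd)/z)"
proof -
  have f: "(1 - z^2*X*X) * (1 - (g^2*Qd^2/z^2)*(X*X)) = (1 + (-g*Qd)*(X*X) - X*(z + (-g*Qd)/z)) * (1 + (-g*Qd)*(X*X) + X*(z + (-g*Qd)/z))"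
    if "z \<noteq> 0" for X z :: complex
    using that by (simp add: field_simps power2_eq_square)
  assume z: "z \<noteq> 0"
  show ?thesis
    unfolding phib_def qpoch_def poly_prod prod.distrib[symmetric]
  proof (rule prod.cong[OF refl])
    fix j assume "j \<in> {..<k}"
    have e: "(Qd^2)^j = Qd^j*Qd^j" "Qd^(2*j) = Qd^j*Qd^j" by (simp_all add: power_mult[symmetric] mult_2 power_add)
    show "(1 - z^2 * (Qd^2)^j) * (1 - g^2*Qd^2/z^2 * (Qd^2)^j) = poly (linp j * linm j) (z + - g * Qd / z)"
    proof -
      let ?L = "z + - g * Qd / z" and ?X = "Qd^j"
      have p0: "poly (linp j * linm j) L = (1 + (-g*Qd)*(?X*?X) - ?X*L) * (1 + (-g*Qd)*(?X*?X) + ?X*L)" for L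
        unfolding linp_def linm_def e(2) by (simp add: algebra_simps)
      note p = p0[of ?L]
      have l: "(1 - z^2 * (Qd^2)^j) * (1 - g^2*Qd^2/z^2 * (Qd^2)^j) = (1 - z^2*?X*?X) * (1 - (g^2*Qd^2/z^2)*(?X*?X))"
        unfolding e(1) by (simp add: mult.assoc)
      show ?thesis unfolding l p f[OF z] ..
    qed
  qed
qed


definition "PL = (\<Sum>k\<le>N. smult (coefA Qd (inverse (Qd^(2*n))) (inverse (Qd^(2*(N-n)+1)))
      (inverse (Qd^N)) (- inverse (Qd^N)) (g*Qd) k) (\<Prod>j<k. linp j))"
definition "PR = (\<Sum>k\<le>n. smult (coefA (Qd^2) (inverse (Qd^(2*n))) (inverse (Qd^(2*(N-n)+1)))
      (inverse (Qd^(2*N))) (g*Qd) (g*Qd^2) k) (\<Prod>j<k. linp j * linm j))"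

lemma LS_poly: "z \<noteq> 0 \<Longrightarrow> LS q N n g z = poly PL (z + (-g*Qd)/z)"
  unfolding LS_def PL_def poly_sum poly_smult by (intro sum.cong refl arg_cong2[where f=times] phiL_poly)

lemma RS_poly: "z \<noteq> 0 \<Longrightarrow> RS q N n g z = poly PR (z + (-g*Qd)/z)"
  unfolding RS_def PR_def poly_sum poly_smult by (intro sum.cong refl arg_cong2[where f=times] phiR_poly)

lemma deg1: "degree [:a, b:] \<le> 1"
  by (rule order.trans[OF degree_pCons_le]) simp

lemma deg_prod: "(\<And>j. degree (f j) \<le> d) \<Longrightarrow> degree (\<Prod>j<k. f j) \<le> k * d"
proof -
  assume h: "\<And>j. degree (f j) \<le> d"
  have "degree (\<Prod>j<k. f j) \<le> sum (degree \<circ> f) {..<k}" by (rule degree_prod_sum_le) simp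
  also have "\<dots> \<le> sum (\<lambda>_. d) {..<k}" by (rule sum_mono) (simp add: h)
  finally show ?thesis by simp
qed

lemma degPL: "degree PL \<le> N"
  unfolding PL_def
proof (rule degree_sum_le)
  fix k assume "k \<in> {..N}"
  then have "degree (\<Prod>j<k. linp j) \<le> N" using deg_prod[of linp 1 k] deg1 by (force simp: linp_def)
  then show "degree (smult (coefA Qd (inverse (Qd^(2*n))) (inverse (Qd^(2*(N-n)+1)))
      (inverse (Qd^N)) (- inverse (Qd^N)) (g*Qd) k) (\<Prod>j<k. linp j)) \<le> N"
    using degree_smult_le order.trans by blast
qed simp

lemma degPR: "2*n \<le> N \<Longrightarrow> degree PR \<le> N"
  unfolding PR_def
proof (rule degree_sum_le)
  fix k assume "k \<in> {..n}" "2*n \<le> N"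
  have "degree (linp j * linm j) \<le> 2" for j
  proof -
    have "degree (linp j) \<le> 1" "degree (linm j) \<le> 1" unfolding linp_def linm_def by (rule deg1)+
    then show ?thesis using degree_mult_le[of "linp j" "linm j"] by linarith
  qed
  then have "degree (\<Prod>j<k. linp j * linm j) \<le> k * 2" by (rule deg_prod)
  then have "degree (\<Prod>j<k. linp j * linm j) \<le> N" using \<open>k \<in> {..n}\<close> \<open>2*n \<le> N\<close> by simp
  then show "degree (smult (coefA (Qd^2) (inverse (Qd^(2*n))) (inverse (Qd^(2*(N-n)+1)))
      (inverse (Qd^(2*N))) (g*Qd) (g*Qd^2) k) (\<Prod>j<k. linp j * linm j)) \<le> N"
    using degree_smult_le order.trans by blast
qed simp

lemma Lam_im: "Im (inverse (Qd^x) + (-g*Qd)/inverse (Qd^x)) = - Im g * q^(Suc x)"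
  by (simp add: divide_inverse flip: of_real_power)

lemma Lam_inj: "inj_on (\<lambda>x. inverse (Qd^x) + (-g*Qd)/inverse (Qd^x)) {..N}"
proof (rule inj_onI)
  fix x y assume "x \<in> {..N}" "y \<in> {..N}" and h: "inverse (Qd^x) + (-g*Qd)/inverse (Qd^x) = inverse (Qd^y) + (-g*Qd)/inverse (Qd^y)"
  then have "Im (inverse (Qd^x) + (-g*Qd)/inverse (Qd^x)) = Im (inverse (Qd^y) + (-g*Qd)/inverse (Qd^y))" by simp
  then have "- Im g * q^(Suc x) = - Im g * q^(Suc y)" unfolding Lam_im .
  then have qe: "q^x = q^y" using img q0 by simp
  show "x = y"
  proof (cases x y rule: linorder_cases)
    case less then show ?thesis using power_strict_decreasing[OF less q0 q1] qe by simp
  next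
    case greater then show ?thesis using power_strict_decreasing[OF greater q0 q1] qe by simp
  qed
qed

lemma poly_all: "2*n \<le> N \<Longrightarrow> z \<noteq> 0 \<Longrightarrow> LS q N n g z = RS q N n g z"
proof -
  assume nN2: "2*n \<le> N" and z: "z \<noteq> 0"
  let ?A = "(\<lambda>x. inverse (Qd^x) + (-g*Qd)/inverse (Qd^x)) ` {..N}"
  have cA: "card ?A = Suc N" using card_image[OF Lam_inj] by simp
  have "PL = PR"
  proof (rule poly_eqI_degree)
    fix L assume "L \<in> ?A"
    then obtain x where x: "x \<le> N" "L = inverse (Qd^x) + (-g*Qd)/inverse (Qd^x)" by auto
    have u: "inverse (Qd^x) \<noteq> 0" using q0 by simp
    show "poly PL L = poly PR L"
      unfolding x(2) LS_poly[OF u, symmetric] RS_poly[OF u, symmetric]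
      by (rule grid_generic[OF q0 q1 nN img x(1)])
  next
    show "degree PL < card ?A" using degPL cA by simp
    show "degree PR < card ?A" using degPR[OF nN2] cA by simp
  qed
  then show ?thesis using LS_poly[OF z] RS_poly[OF z] by simp
qed

end

definition pf :: "(complex \<Rightarrow> complex) \<Rightarrow> bool" where "pf f = (\<exists>P. \<forall>x. poly P x = f x)"

lemma pf_const: "pf (\<lambda>x. c)" unfolding pf_def by (rule exI[of _ "[:c:]"]) simp
lemma pf_id: "pf (\<lambda>x. x)" unfolding pf_def by (rule exI[of _ "[:0,1:]"]) simp
lemma pf_add: "pf f \<Longrightarrow> pf h \<Longrightarrow> pf (\<lambda>x. f x + h x)"
  unfolding pf_def by (metis poly_add)
lemma pf_diff: "pf f \<Longrightarrow> pf h \<Longrightarrow> pf (\<lambda>x. f x - h x)"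
  unfolding pf_def by (metis poly_diff)
lemma pf_mult: "pf f \<Longrightarrow> pf h \<Longrightarrow> pf (\<lambda>x. f x * h x)"
  unfolding pf_def by (metis poly_mult)
lemma pf_uminus: "pf f \<Longrightarrow> pf (\<lambda>x. - f x)"
  unfolding pf_def by (metis poly_minus)
lemma pf_divc: "pf f \<Longrightarrow> pf (\<lambda>x. f x / c)"
proof -
  assume "pf f"
  then obtain P where "\<forall>x. poly P x = f x" unfolding pf_def by blast
  then have "\<forall>x. poly (smult (1/c) P) x = f x / c" by simp
  then show ?thesis unfolding pf_def by blast
qed
lemma pf_power: "pf f \<Longrightarrow> pf (\<lambda>x. f x ^ m)"
  unfolding pf_def by (metis poly_power)
lemma pf_sum: "(\<And>k. pf (f k)) \<Longrightarrow> pf (\<lambda>x. \<Sum>k\<in>A. f k x)"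
proof (induction A rule: infinite_finite_induct)
  case (infinite A) then show ?case by (simp add: pf_const)
next
  case empty then show ?case by (simp add: pf_const)
next
  case (insert a A) then show ?case by (simp add: pf_add)
qed
lemma pf_prod: "(\<And>k. pf (f k)) \<Longrightarrow> pf (\<lambda>x. \<Prod>k\<in>A. f k x)"
proof (induction A rule: infinite_finite_induct)
  case (infinite A) then show ?case by (simp add: pf_const)
next
  case empty then show ?case by (simp add: pf_const)
next
  case (insert a A) then show ?case by (simp add: pf_mult)
qed

lemmas pf_intros = pf_sum pf_prod pf_add pf_diff pf_mult pf_uminus pf_divc pf_power pf_id pf_const

lemma pf_test: "pf (\<lambda>g. \<Sum>k\<le>N. c k * qpoch (g*W*W^k) W (2*N-k) * phib W (-g*W) k z)"
  unfolding qpoch_def phib_def by (intro pf_intros)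

lemma qpoch_add: "qpoch x p (a + b) = qpoch x p a * qpoch (x*p^a) p b"
  by (induction b) (simp_all add: qpoch_Suc power_add algebra_simps, simp add: qpoch_def)

lemma qpoch_split2: "qpoch x (p^2) k * qpoch (x*p) (p^2) k = qpoch x p (2*k)"
proof (induction k)
  case 0 then show ?case by (simp add: qpoch_def)
next
  case (Suc k)
  have "qpoch x p (2 * Suc k) = qpoch x p (2*k) * (1 - x*p^(2*k)) * (1 - x*p^(Suc (2*k)))"
    by (simp add: qpoch_Suc)
  also have "\<dots> = qpoch x (p^2) (Suc k) * qpoch (x*p) (p^2) (Suc k)"
  proof -
    have e: "(p^2)^k = p^(2*k)" by (simp add: power_mult)
    show ?thesis unfolding Suc.IH[symmetric] qpoch_Suc e by (simp add: algebra_simps)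
  qed
  finally show ?case by simp
qed

lemma gen_to_all:
  fixes q :: real and N n :: nat and z g0 :: complex
  assumes q0: "0 < q" and q1: "q < 1" and nN: "n \<le> N"
    and gen: "\<And>g. Im g \<noteq> 0 \<Longrightarrow> LS q N n g z = RS q N n g z"
    and W0: "qpoch (g0 * complex_of_real q) (complex_of_real q) (2*N) \<noteq> 0"
  shows "LS q N n g0 z = RS q N n g0 z"
proof -
  let ?Q = "complex_of_real q"
  let ?a1 = "inverse (?Q^(2*n))" and ?e = "inverse (?Q^(2*(N-n)+1))"
  define cL where "cL k = qpoch ?a1 ?Q k * qpoch ?e ?Q k * ?Q^k / (qpoch (inverse (?Q^N)) ?Q k * qpoch (- inverse (?Q^N)) ?Q k * qpoch ?Q ?Q k)" for k
  define cR where "cR k = qpoch ?a1 (?Q^2) k * qpoch ?e (?Q^2) k * (?Q^2)^k / (qpoch (inverse (?Q^(2*N))) (?Q^2) k * qpoch (?Q^2) (?Q^2) k)" for k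
  define H where "H g = (\<Sum>k\<le>N. cL k * qpoch (g*?Q*?Q^k) ?Q (2*N-k) * phib ?Q (-g*?Q) k z)
      - (\<Sum>k\<le>n. cR k * qpoch (g*?Q*?Q^(2*k)) ?Q (2*N-2*k) * phib (?Q^2) (g^2*?Q^2) k (z^2))" for g
  have Heq: "H g = qpoch (g*?Q) ?Q (2*N) * (LS q N n g z - RS q N n g z)"
    if W: "qpoch (g*?Q) ?Q (2*N) \<noteq> 0" for g
  proof -
    have L: "qpoch (g*?Q) ?Q (2*N) * (coefA ?Q ?a1 ?e (inverse (?Q^N)) (- inverse (?Q^N)) (g*?Q) k * phib ?Q (-g*?Q) k z)
       = cL k * qpoch (g*?Q*?Q^k) ?Q (2*N-k) * phib ?Q (-g*?Q) k z" if k: "k \<le> N" for k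
    proof -
      have sp: "qpoch (g*?Q) ?Q (2*N) = qpoch (g*?Q) ?Q k * qpoch (g*?Q*?Q^k) ?Q (2*N-k)"
        using qpoch_add[of "g*?Q" ?Q k "2*N-k"] k by simp
      have nz: "qpoch (g*?Q) ?Q k \<noteq> 0" using W sp by auto
      show ?thesis unfolding sp coefA_def cL_def using nz by (simp add: field_simps)
    qed
    have R: "qpoch (g*?Q) ?Q (2*N) * (coefA (?Q^2) ?a1 ?e (inverse (?Q^(2*N))) (g*?Q) (g*?Q^2) k * phib (?Q^2) (g^2*?Q^2) k (z^2))
       = cR k * qpoch (g*?Q*?Q^(2*k)) ?Q (2*N-2*k) * phib (?Q^2) (g^2*?Q^2) k (z^2)" if k: "k \<le> n" for k
    proof -
      have sp: "qpoch (g*?Q) ?Q (2*N) = qpoch (g*?Q) ?Q (2*k) * qpoch (g*?Q*?Q^(2*k)) ?Q (2*N-2*k)"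
        using qpoch_add[of "g*?Q" ?Q "2*k" "2*N-2*k"] k nN by simp
      have s2: "qpoch (g*?Q) ?Q (2*k) = qpoch (g*?Q) (?Q^2) k * qpoch (g*?Q^2) (?Q^2) k"
        using qpoch_split2[of "g*?Q" ?Q k] by (simp add: power2_eq_square mult.assoc)
      have nz: "qpoch (g*?Q) (?Q^2) k \<noteq> 0" "qpoch (g*?Q^2) (?Q^2) k \<noteq> 0" using W sp s2 by auto
      show ?thesis unfolding sp s2 coefA_def cR_def using nz by (simp add: field_simps)
    qed
    have s1: "(\<Sum>k\<le>N. cL k * qpoch (g*?Q*?Q^k) ?Q (2*N-k) * phib ?Q (-g*?Q) k z)
      = (\<Sum>k\<le>N. qpoch (g*?Q) ?Q (2*N) * (coefA ?Q ?a1 ?e (inverse (?Q^N)) (- inverse (?Q^N)) (g*?Q) k * phib ?Q (-g*?Q) k z))"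
      by (rule sum.cong[OF refl], rule L[symmetric], simp)
    have s2: "(\<Sum>k\<le>n. cR k * qpoch (g*?Q*?Q^(2*k)) ?Q (2*N-2*k) * phib (?Q^2) (g^2*?Q^2) k (z^2))
      = (\<Sum>k\<le>n. qpoch (g*?Q) ?Q (2*N) * (coefA (?Q^2) ?a1 ?e (inverse (?Q^(2*N))) (g*?Q) (g*?Q^2) k * phib (?Q^2) (g^2*?Q^2) k (z^2)))"
      by (rule sum.cong[OF refl], rule R[symmetric], simp)
    show ?thesis unfolding H_def s1 s2 LS_def RS_def right_diff_distrib sum_distrib_left ..
  qed
  have "pf H" unfolding H_def qpoch_def phib_def by (intro pf_intros)
  then obtain P where P: "\<And>g. poly P g = H g" unfolding pf_def by blast
  have Wg: "qpoch (g*?Q) ?Q (2*N) \<noteq> 0" if im: "Im g \<noteq> 0" for g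
  proof (rule qpoch_nz[OF q0 q1 nN im])
    fix j show "1 - g*?Q*?Q^j \<noteq> 0" by (rule lin_ne(4)[OF q0 q1 nN im])
  qed
  have "P = 0"
  proof (rule ccontr)
    assume "P \<noteq> 0"
    then have fin: "finite {x. poly P x = 0}" by (rule poly_roots_finite)
    have "range (\<lambda>m::nat. \<i> * of_nat (Suc m)) \<subseteq> {x. poly P x = 0}"
    proof
      fix x assume "x \<in> range (\<lambda>m::nat. \<i> * of_nat (Suc m))"
      then obtain m where x: "x = \<i> * of_nat (Suc m)" by auto
      then have im: "Im x \<noteq> 0" by simp
      show "x \<in> {x. poly P x = 0}" using P Heq[OF Wg[OF im]] gen[OF im] by simp
    qed
    moreover have "infinite (range (\<lambda>m::nat. \<i> * of_nat (Suc m)))"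
      by (rule range_inj_infinite) (auto simp: inj_def)
    ultimately show False using fin finite_subset by blast
  qed
  then have "H g0 = 0" using P[of g0] by simp
  then show ?thesis using Heq[OF W0] W0 by simp
qed

theorem mainTheorem9:
  fixes q :: real and N n :: nat and \<gamma> :: complex
  assumes "0 < q" and "q < 1" and "0 < N" and "n \<le> N"
    and "\<And>j::nat. \<gamma> * complex_of_real q \<noteq> inverse (complex_of_real q ^ j)"
    and "\<And>j::nat. \<gamma> * complex_of_real q ^ 2 \<noteq> inverse (complex_of_real q ^ j)"
  defines "Q \<equiv> complex_of_real q"
  defines "L \<equiv> (\<lambda>x::complex. phi43_term
              (inverse (Q ^ (2 * n))) (inverse (Q ^ (2 * (N - n) + 1)))
              (qpow q (- x)) (- \<gamma> * qpow q (x + 1))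
              (inverse (Q ^ N)) (- inverse (Q ^ N)) (\<gamma> * Q) Q)"
  defines "R \<equiv> (\<lambda>x::complex. phi43_term
              (inverse (Q ^ (2 * n))) (inverse (Q ^ (2 * (N - n) + 1)))
              (qpow q (- 2 * x)) (\<gamma> ^ 2 * qpow q (2 * x + 2))
              (inverse (Q ^ (2 * N))) (\<gamma> * Q) (\<gamma> * Q ^ 2) (Q ^ 2))"
  shows "(2 * n \<le> N \<longrightarrow> (\<forall>x::complex. L x = R x))
       \<and> (N < 2 * n \<longrightarrow> (\<forall>x::nat. x \<le> N \<longrightarrow> L (of_nat x) = R (of_nat x)))"
proof -
  note q0 = assms(1) and q1 = assms(2) and nN = assms(4)
  have f: "1 - \<gamma> * complex_of_real q * complex_of_real q ^ j \<noteq> 0" for j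
  proof
    assume "1 - \<gamma> * complex_of_real q * complex_of_real q ^ j = 0"
    then have "\<gamma> * complex_of_real q = inverse (complex_of_real q ^ j)"
      using q0 by (simp add: field_simps)
    with assms(5) show False by blast
  qed
  have W0: "qpoch (\<gamma> * complex_of_real q) (complex_of_real q) (2*N) \<noteq> 0"
    unfolding qpoch_def using f by (simp add: prod_zero_iff)
  have Lx: "L x = LS q N n \<gamma> (qpow q (-x))"
    if "inverse (complex_of_real q ^ (2 * n)) = inverse (complex_of_real q^K0) \<or> qpow q (- x) = inverse (complex_of_real q^K0)"
      "K0 \<le> N" for x K0
    unfolding L_def Q_def by (rule L_eq_LS[OF q0 that(2) that(1)])
  have Rx: "R x = RS q N n \<gamma> (qpow q (-x))" for x
    unfolding R_def Q_def by (rule R_eq_RS[OF q0])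
  show ?thesis
  proof (intro conjI impI allI)
    assume h: "2 * n \<le> N"
    fix x :: complex
    have z0: "qpow q (-x) \<noteq> 0" by (rule qpow_nz)
    have "LS q N n \<gamma> (qpow q (-x)) = RS q N n \<gamma> (qpow q (-x))"
      by (rule gen_to_all[OF q0 q1 nN _ W0]) (rule poly_all[OF q0 q1 nN _ h z0])
    then show "L x = R x" using Lx[of "2*n" x] h Rx[of x] by simp
  next
    fix x :: nat
    assume xN: "x \<le> N"
    have z: "qpow q (- of_nat x) = inverse (complex_of_real q ^ x)"
      using q0 by (simp add: qpow_neg qpow_nat)
    have "LS q N n \<gamma> (inverse (complex_of_real q ^ x)) = RS q N n \<gamma> (inverse (complex_of_real q ^ x))"
      by (rule gen_to_all[OF q0 q1 nN _ W0]) (rule grid_generic[OF q0 q1 nN _ xN])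
    then show "L (of_nat x) = R (of_nat x)" using Lx[of x "of_nat x"] xN Rx[of "of_nat x"] z by simp
  qed
qed

end
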